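(* Let $\gamma_1,\gamma_2>0$ and consider the birth-death chain RDS $(\theta,\varphi)$ on $\mathbb{N}_0$ described in the context, and let $W_0=\{0,2,4,\dots\}$, $W_1=\{1,3,5,\dots\}$. Let $K:\mathcal{Q}_+\to\mathcal{P}(\mathbb{N}_0)$, $q\mapsto K_q$, be a finite random set such that, for some $i\in\{0,1\}$, $K_q\subset W_i$ for $\mathbb{P}$-a.e. $q$. Then $\#\varphi^n_q(K_q)\to1$ in probability as $n\to\infty$ (where $\#$ denotes cardinality).
   Context: Noise space: $\mathcal{Q}_+=\{q=(q_n)_{n\in\mathbb{N}_0}: q_n\in[0,1]\}$ with the product Borel $\sigma$-algebra and the product measure $\mathbb{P}=\lambda^{\mathbb{N}_0}$, $\lambda$ Lebesgue measure on $[0,1]$; shift $\theta(q_0,q_1,\dots)=(q_1,q_2,\dots)$. For $q\in\mathcal{Q}_+$ define $f_q:\mathbb{N}_0\to\mathbb{N}_0$ by $f_q(x)=x+1$ if $q_0<\frac{\gamma_1}{\gamma_1+\gamma_2x}$ and $f_q(x)=x-1$ otherwise. The cocycle is $\varphi^0_q(x)=x$ and $\varphi^n_q(x)=f_{\theta^{n-1}q}\circ\cdots\circ f_q(x)$ for $n\geq1$. A map $K:\mathcal{Q}_+\to\mathcal{P}(\mathbb{N}_0)$ is a random set if $q\mapsto d(x,K_q)=\inf_{y\in K_q}|x-y|$ is measurable for every $x$; it is a finite random set if moreover $K_q$ is nonempty and finite for every $q$. *)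

theory Defs
  imports "HOL-Probability.Probability"
begin

definition noise :: "(nat \<Rightarrow> real) measure" where
  "noise = PiM UNIV (\<lambda>_. restrict_space lborel {0..1::real})"

definition shift :: "(nat \<Rightarrow> real) \<Rightarrow> (nat \<Rightarrow> real)" where
  "shift q = (\<lambda>n. q (Suc n))"

text \<open>One-step map f_q (nat subtraction; the case x = 0 moving down only
  happens on the null event q 0 = 1).\<close>
definition fstep :: "real \<Rightarrow> real \<Rightarrow> (nat \<Rightarrow> real) \<Rightarrow> nat \<Rightarrow> nat" where
  "fstep g1 g2 q x = (if q 0 < g1 / (g1 + g2 * real x) then x + 1 else x - 1)"

fun phi :: "real \<Rightarrow> real \<Rightarrow> nat \<Rightarrow> (nat \<Rightarrow> real) \<Rightarrow> nat \<Rightarrow> nat" where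
  "phi g1 g2 0 q x = x"
| "phi g1 g2 (Suc n) q x = fstep g1 g2 ((shift ^^ n) q) (phi g1 g2 n q x)"

definition setdist :: "nat \<Rightarrow> nat set \<Rightarrow> ereal" where
  "setdist x K = (INF y\<in>K. ereal \<bar>real x - real y\<bar>)"

definition random_set :: "((nat \<Rightarrow> real) \<Rightarrow> nat set) \<Rightarrow> bool" where
  "random_set K \<longleftrightarrow> (\<forall>x. (\<lambda>q. setdist x (K q)) \<in> borel_measurable noise)"

definition finite_random_set :: "((nat \<Rightarrow> real) \<Rightarrow> nat set) \<Rightarrow> bool" where
  "finite_random_set K \<longleftrightarrow> random_set K \<and>
     (\<forall>q\<in>space noise. K q \<noteq> {} \<and> finite (K q))"

definition W :: "nat \<Rightarrow> nat set" where
  "W i = {x. x mod 2 = i}"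

end

theory Submission
  imports Defs
begin

abbreviation U :: "real measure" where "U \<equiv> restrict_space lborel {0..1::real}"

lemma prob_space_U: "prob_space U"
proof
  show "emeasure U (space U) = 1"
    by (simp add: space_restrict_space emeasure_restrict_space)
qed

lemma prob_space_noise: "prob_space noise"
  unfolding noise_def by (rule prob_space_PiM) (rule prob_space_U)

interpretation N: prob_space noise by (rule prob_space_noise)

interpretation NP: product_prob_space "\<lambda>_::nat. U" "UNIV :: nat set"
  by (simp add: product_prob_space_def product_sigma_finite_def prob_space_U prob_space_imp_sigma_finite product_prob_space_axioms_def)

lemma space_noise: "space noise = {q. \<forall>i. q i \<in> {0..1}}"
  by (auto simp: noise_def space_PiM PiE_def Pi_def space_restrict_space)

lemma coord_meas: "i \<in> I \<Longrightarrow> (\<lambda>q. q i) \<in> borel_measurable (PiM I (\<lambda>_. U))"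
  apply (rule measurable_compose[OF measurable_component_singleton[of i I "\<lambda>_. U"]])
   apply simp
  apply (rule measurable_restrict_space1)
  apply simp
  done

lemma shift_pow: "(shift ^^ n) q = (\<lambda>j. q (j + n))"
  by (induction n) (auto simp: shift_def)

lemma phi_Suc': "phi g1 g2 (Suc n) q x =
   (if q n < g1 / (g1 + g2 * real (phi g1 g2 n q x)) then phi g1 g2 n q x + 1 else phi g1 g2 n q x - 1)"
  by (simp add: fstep_def shift_pow)

lemma phi_meas: "{..<n} \<subseteq> I \<Longrightarrow> (\<lambda>q. phi g1 g2 n q x) \<in> measurable (PiM I (\<lambda>_. U)) (count_space UNIV)"
proof (induction n)
  case 0
  then show ?case by simp
next
  case (Suc n)
  have "{..<n} \<subseteq> I" using Suc.prems by auto
  then have IH: "(\<lambda>q. phi g1 g2 n q x) \<in> measurable (PiM I (\<lambda>_. U)) (count_space UNIV)" by (rule Suc.IH)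
  have h: "(\<lambda>q. g1 / (g1 + g2 * real (phi g1 g2 n q x))) \<in> borel_measurable (PiM I (\<lambda>_. U))"
    by (rule measurable_compose[OF IH]) simp
  have c: "(\<lambda>q. q n) \<in> borel_measurable (PiM I (\<lambda>_. U))"
    using Suc by (intro coord_meas) auto
  have p: "{q \<in> space (PiM I (\<lambda>_. U)). q n < g1 / (g1 + g2 * real (phi g1 g2 n q x))} \<in> sets (PiM I (\<lambda>_. U))"
    using h c by measurable
  show ?case
    unfolding phi_Suc'
    by (rule measurable_If[OF _ _ p]; rule measurable_compose[OF IH]; simp)
qed

lemma phi_local: "(\<And>j. j < n \<Longrightarrow> q j = q' j) \<Longrightarrow> phi g1 g2 n q x = phi g1 g2 n q' x"
  by (induction n) (auto simp: fstep_def shift_pow)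

declare phi.simps(2)[simp del]

lemma pred_Q:
  fixes f g :: "'a \<Rightarrow> nat"
  assumes [measurable]: "f \<in> measurable M (count_space UNIV)" "g \<in> measurable M (count_space UNIV)"
  shows "Measurable.pred M (\<lambda>r. Q (f r) (g r))"
proof -
  have eq: "(\<lambda>r. Q (f r) (g r)) = (\<lambda>r. \<exists>a::nat. \<exists>b::nat. Q a b \<and> f r = a \<and> g r = b)" by auto
  show ?thesis unfolding eq by measurable
qed

lemma indep_coords: "N.indep_vars (\<lambda>_. U) (\<lambda>i q. q i) UNIV"
proof -
  have rv: "\<And>i. (\<lambda>q. q i) \<in> measurable noise U"
    unfolding noise_def by (rule measurable_component_singleton) simp
  have "distr noise (PiM UNIV (\<lambda>_. U)) (\<lambda>x. \<lambda>i\<in>UNIV. x i) = noise"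
  proof -
    have "(\<lambda>x::nat\<Rightarrow>real. \<lambda>i\<in>UNIV. x i) = (\<lambda>x. x)" by (auto simp: restrict_def)
    then show ?thesis by (simp add: noise_def)
  qed
  moreover have "PiM UNIV (\<lambda>i. distr noise U (\<lambda>q. q i)) = noise"
    unfolding noise_def using NP.PiM_component by simp
  ultimately show ?thesis
    using N.indep_vars_iff_distr_eq_PiM[where I="UNIV::nat set" and M'="\<lambda>_. U" and X="\<lambda>i q. q i", OF _ rv] by simp
qed

lemma block_indep:
  fixes Q :: "nat \<Rightarrow> nat \<Rightarrow> bool"
  assumes S: "S \<in> sets U"
  shows "measure noise {q\<in>space noise. Q (phi g1 g2 n q x) (phi g1 g2 n q y) \<and> (\<forall>j\<in>{n..<n+m}. q j \<in> S)}
     = measure noise {q\<in>space noise. Q (phi g1 g2 n q x) (phi g1 g2 n q y)} * measure U S ^ m"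
proof -
  let ?A = "{..<n}" and ?B = "{n..<n+m}"
  let ?X = "\<lambda>\<omega>::nat\<Rightarrow>real. restrict (\<lambda>i. \<omega> i) ?A" and ?Y = "\<lambda>\<omega>::nat\<Rightarrow>real. restrict (\<lambda>i. \<omega> i) ?B"
  have ind: "N.indep_var (PiM ?A (\<lambda>_. U)) ?X (PiM ?B (\<lambda>_. U)) ?Y"
    by (rule N.indep_var_restrict[OF indep_coords]) auto
  define E' where "E' = {r\<in>space (PiM ?A (\<lambda>_. U)). Q (phi g1 g2 n r x) (phi g1 g2 n r y)}"
  have E': "E' \<in> sets (PiM ?A (\<lambda>_. U))"
    unfolding E'_def by (rule pred_Q[THEN predE]; rule phi_meas; simp)
  define Xb where "Xb = PiE ?B (\<lambda>_. S)"
  have Xb: "Xb \<in> sets (PiM ?B (\<lambda>_. U))"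
    unfolding Xb_def using S by (intro sets_PiM_I_finite) auto
  have loc: "phi g1 g2 n (?X q) z = phi g1 g2 n q z" for q z
    by (rule phi_local) simp
  have spX: "q \<in> space noise \<Longrightarrow> ?X q \<in> space (PiM ?A (\<lambda>_. U))" for q
    by (auto simp: space_noise space_PiM space_restrict_space)
  have e1: "(\<lambda>q. (?X q, ?Y q)) -` (E' \<times> Xb) \<inter> space noise =
     {q\<in>space noise. Q (phi g1 g2 n q x) (phi g1 g2 n q y) \<and> (\<forall>j\<in>{n..<n+m}. q j \<in> S)}"
    using spX by (auto simp: E'_def Xb_def loc PiE_def Pi_def)
  have e2: "?X -` E' \<inter> space noise = {q\<in>space noise. Q (phi g1 g2 n q x) (phi g1 g2 n q y)}"
    using spX by (auto simp: E'_def loc)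
  have e3: "?Y -` Xb \<inter> space noise = {q\<in>space noise. \<forall>j\<in>?B. q j \<in> S}"
    by (auto simp: Xb_def PiE_def Pi_def)
  have "emeasure noise {q\<in>space noise. \<forall>j\<in>?B. q j \<in> S} = (\<Prod>j\<in>?B. emeasure U S)"
    unfolding noise_def using S by (intro NP.emeasure_PiM_Collect) auto
  also have "\<dots> = ennreal (measure U S ^ m)"
    using NP.M.emeasure_eq_measure by (simp add: ennreal_power)
  finally have e4: "measure noise {q\<in>space noise. \<forall>j\<in>?B. q j \<in> S} = measure U S ^ m"
    by (simp add: N.emeasure_eq_measure)
  show ?thesis
    using N.indep_varD[OF ind E' Xb] e1 e2 e3 e4 by simp
qed

lemma coord_noise[measurable]: "(\<lambda>q. q j) \<in> measurable noise U"
  unfolding noise_def by (rule measurable_component_singleton) simp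

lemma meas_Q: "{q\<in>space noise. Q (phi g1 g2 n q x) (phi g1 g2 n q y)} \<in> sets noise"
  unfolding noise_def by (rule pred_Q[THEN predE]; rule phi_meas; simp)

lemma meas_box: "S \<in> sets U \<Longrightarrow> {q\<in>space noise. \<forall>j\<in>B. q j \<in> S} \<in> sets noise"
proof -
  assume [measurable]: "S \<in> sets U"
  have "Measurable.pred noise (\<lambda>q. \<forall>j::nat. j \<in> B \<longrightarrow> q j \<in> S)" by measurable
  then show ?thesis by (simp add: pred_def Ball_def)
qed

lemma meas_Q_box: "S \<in> sets U \<Longrightarrow>
   {q\<in>space noise. Q (phi g1 g2 n q x) (phi g1 g2 n q y) \<and> (\<forall>j\<in>B. q j \<in> S)} \<in> sets noise"
proof -
  assume S: "S \<in> sets U"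
  have "{q\<in>space noise. Q (phi g1 g2 n q x) (phi g1 g2 n q y) \<and> (\<forall>j\<in>B. q j \<in> S)} =
     {q\<in>space noise. Q (phi g1 g2 n q x) (phi g1 g2 n q y)} \<inter> {q\<in>space noise. \<forall>j\<in>B. q j \<in> S}" by auto
  then show ?thesis using meas_Q meas_box[OF S] by auto
qed

lemma U_Ico: "0 \<le> a \<Longrightarrow> a \<le> b \<Longrightarrow> b \<le> 1 \<Longrightarrow> {a..<b} \<in> sets U \<and> measure U {a..<b} = b - a"
proof -
  assume a: "0 \<le> a" "a \<le> b" "b \<le> 1"
  have "measure U {a..<b} = measure lborel {a..<b}"
    using a by (intro measure_restrict_space) auto
  moreover have "{a..<b} \<subseteq> {0..1}" using a by auto
  ultimately show ?thesis using a by (simp add: sets_restrict_space_iff)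
qed

context
  fixes g1 g2 :: real
  assumes g1: "g1 > 0" and g2: "g2 > 0"
begin

lemma step_pm: "q n < 1 \<Longrightarrow> phi g1 g2 (Suc n) q x = phi g1 g2 n q x + 1 \<or> phi g1 g2 (Suc n) q x + 1 = phi g1 g2 n q x"
proof (cases "phi g1 g2 n q x = 0")
  case True
  assume "q n < 1"
  then show ?thesis using g1 True by (simp add: phi_Suc')
next
  case False
  then show ?thesis by (simp add: phi_Suc')
qed

lemma parity: "(\<And>j. j < n \<Longrightarrow> q j < 1) \<Longrightarrow> phi g1 g2 n q x mod 2 = (x + n) mod 2"
proof (induction n)
  case 0 then show ?case by simp
next
  case (Suc n)
  then have IH: "phi g1 g2 n q x mod 2 = (x + n) mod 2" by auto
  have "q n < 1" using Suc.prems by auto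
  from step_pm[of q n x, OF this] show ?case
  proof
    assume "phi g1 g2 (Suc n) q x = phi g1 g2 n q x + 1"
    then show ?thesis using IH by presburger
  next
    assume h: "phi g1 g2 (Suc n) q x + 1 = phi g1 g2 n q x"
    then show ?thesis using IH by presburger
  qed
qed

lemma stay_eq: "phi g1 g2 n q x = phi g1 g2 n q y \<Longrightarrow> phi g1 g2 (n + k) q x = phi g1 g2 (n + k) q y"
  by (induction k) (auto simp: phi_Suc')

lemma p_le_p1: "1 \<le> z \<Longrightarrow> g1 / (g1 + g2 * real z) \<le> g1 / (g1 + g2)"
proof -
  assume z: "1 \<le> z"
  have "g2 * 1 \<le> g2 * real z" using g2 z by (intro mult_left_mono) auto
  then have "g1 + g2 \<le> g1 + g2 * real z" by simp
  moreover have "0 < (g1 + g2 * real z) * (g1 + g2)" using g1 g2 by (intro mult_pos_pos add_pos_nonneg) auto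
  ultimately show ?thesis using g1 by (intro divide_left_mono) auto
qed

lemma down_steps:
  assumes "\<And>j. n \<le> j \<Longrightarrow> j < n + k \<Longrightarrow> g1 / (g1 + g2) \<le> q j \<and> q j < 1"
  shows "phi g1 g2 (n + k) q x \<le> max (phi g1 g2 n q x - k) 1"
  using assms
proof (induction k)
  case 0 then show ?case by simp
next
  case (Suc k)
  then have IH: "phi g1 g2 (n + k) q x \<le> max (phi g1 g2 n q x - k) 1" by auto
  have qj: "g1 / (g1 + g2) \<le> q (n + k)" "q (n+k) < 1" using Suc.prems[of "n+k"] by auto
  show ?case
  proof (cases "phi g1 g2 (n + k) q x = 0")
    case True
    then show ?thesis using qj g1 by (simp add: phi_Suc')
  next
    case False
    then have "g1 / (g1 + g2 * real (phi g1 g2 (n + k) q x)) \<le> q (n + k)"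
      using p_le_p1[of "phi g1 g2 (n + k) q x"] qj by linarith
    then have "phi g1 g2 (n + Suc k) q x = phi g1 g2 (n + k) q x - 1"
      by (simp add: phi_Suc')
    then show ?thesis using IH by auto
  qed
qed

lemma arith_aux: "(a::real) \<le> u \<Longrightarrow> u \<le> b1 + b2 \<Longrightarrow> b2 = b3*(1/4) \<Longrightarrow> tj = b1 + b3
   \<Longrightarrow> b1 \<le> t/4 \<Longrightarrow> tj \<le> t \<Longrightarrow> 0 \<le> t \<Longrightarrow> a \<le> t/2"
  by linarith

lemma tail: "\<exists>A\<ge>0. \<forall>n k. measure noise {q\<in>space noise. k \<le> phi g1 g2 n q y} \<le> A / 2 ^ k"
proof -
  define R0 where "R0 = nat \<lceil>3 * g1 / g2\<rceil>"
  have hp: "g1 / (g1 + g2 * real z) \<le> 1/4" if "R0 \<le> z" for z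
  proof -
    have "3 * g1 / g2 \<le> real z" using that unfolding R0_def by linarith
    then have "3 * g1 \<le> g2 * real z" using g2 by (simp add: divide_le_eq mult.commute)
    then show ?thesis using g1 g2 by (simp add: divide_le_eq)
  qed
  define K0 where "K0 = max (y + 1) (R0 + 1)"
  define A :: real where "A = 2 ^ K0"
  let ?T = "\<lambda>n k. measure noise {q\<in>space noise. k \<le> phi g1 g2 n q y}"
  have "\<forall>k. ?T n k \<le> A / 2 ^ k" for n
  proof (induction n)
    case 0
    show ?case
    proof
      fix k
      show "?T 0 k \<le> A / 2 ^ k"
      proof (cases "k \<le> K0")
        case True
        have "(2::real) ^ k \<le> 2 ^ K0" using True by (intro power_increasing) auto
        then have "1 \<le> A / 2 ^ k" by (simp add: A_def)
        then show ?thesis using N.prob_le_1 by (meson order_trans)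
      next
        case False
        then have "\<not> k \<le> y" by (simp add: K0_def)
        then show ?thesis by (simp add: A_def)
      qed
    qed
  next
    case (Suc n)
    show ?case
    proof
      fix k
      show "?T (Suc n) k \<le> A / 2 ^ k"
      proof (cases "k \<le> K0")
        case True
        have "(2::real) ^ k \<le> 2 ^ K0" using True by (intro power_increasing) auto
        then have "1 \<le> A / 2 ^ k" by (simp add: A_def)
        then show ?thesis using N.prob_le_1 by (meson order_trans)
      next
        case False
        then obtain j where kj: "k = Suc j" and jR: "R0 \<le> j" by (cases k) (auto simp: K0_def)
        let ?S = "{0..<1/4::real}"
        have S: "?S \<in> sets U" "measure U ?S = 1/4" using U_Ico[of 0 "1/4"] by auto
        let ?B1 = "{q\<in>space noise. Suc k \<le> phi g1 g2 n q y}"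
        let ?B2 = "{q\<in>space noise. phi g1 g2 n q y \<in> {j, k} \<and> (\<forall>i\<in>{n..<n+1}. q i \<in> ?S)}"
        let ?B3 = "{q\<in>space noise. phi g1 g2 n q y \<in> {j, k}}"
        have sub: "{q\<in>space noise. k \<le> phi g1 g2 (Suc n) q y} \<subseteq> ?B1 \<union> ?B2"
        proof
          fix q assume q: "q \<in> {q\<in>space noise. k \<le> phi g1 g2 (Suc n) q y}"
          let ?z = "phi g1 g2 n q y"
          show "q \<in> ?B1 \<union> ?B2"
          proof (cases "Suc k \<le> ?z")
            case True then show ?thesis using q by auto
          next
            case False
            have up: "?z + 1 < k \<Longrightarrow> False" using q by (auto simp: phi_Suc' split: if_splits)
            have a1: "q n < g1 / (g1 + g2 * real ?z)"
              using q False kj by (auto simp: phi_Suc' split: if_splits)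
            have a2: "\<not> ?z + 1 < k" using up by blast
            have a3: "g1 / (g1 + g2 * real ?z) \<le> 1/4" using a2 kj jR by (intro hp) linarith
            have a4: "0 \<le> q n" using q by (auto simp: space_noise)
            have "q n < 1/4" using a1 a3 by linarith
            then have "q n \<in> ?S" using a4 by simp
            moreover have "?z \<in> {j, k}" using a2 False kj by auto
            ultimately show ?thesis using q by auto
          qed
        qed
        have m1: "?B1 \<in> sets noise" "?B3 \<in> sets noise" using meas_Q[where Q="\<lambda>a b. Suc k \<le> a"] meas_Q[where Q="\<lambda>a b. a \<in> {j,k}"] by auto
        have m2: "?B2 \<in> sets noise" by (rule meas_Q_box[OF S(1), where Q="\<lambda>a b. a \<in> {j,k}" and x=y and y=y])
        have i0: "?T (Suc n) k \<le> measure noise (?B1 \<union> ?B2)"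
          using sub m1 m2 by (intro N.finite_measure_mono) auto
        have i1: "measure noise (?B1 \<union> ?B2) \<le> measure noise ?B1 + measure noise ?B2"
          using m1 m2 by (intro measure_Un_le) auto
        have i2: "measure noise ?B2 = measure noise ?B3 * (1/4)"
          using block_indep[OF S(1), where Q="\<lambda>a b. a \<in> {j,k}" and m=1 and n=n and x=y and y=y] S(2) by simp
        have i3: "?T n j = measure noise ?B1 + measure noise ?B3"
        proof -
          have "{q\<in>space noise. j \<le> phi g1 g2 n q y} = ?B1 \<union> ?B3" using kj by auto
          moreover have "?B1 \<inter> ?B3 = {}" using kj by auto
          ultimately show ?thesis
            using m1 by (simp add: N.finite_measure_Union)
        qed
        have i4: "?T n (Suc k) \<le> A / 2 ^ Suc k" "?T n j \<le> A / 2 ^ j"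
          by (rule spec[OF Suc.IH])+
        have i5: "A / 2 ^ Suc k = (A / 2 ^ j) / 4" "A / 2 ^ k = (A / 2 ^ j) / 2"
          by (simp_all add: kj field_simps)
        have i6: "A / 2 ^ j \<ge> 0" by (simp add: A_def)
        show ?thesis
          unfolding i5(2) by (rule arith_aux[OF i0 i1 i2 i3 i4(1)[unfolded i5(1)] i4(2) i6])
      qed
    qed
  qed
  moreover have "A \<ge> 0" by (simp add: A_def)
  ultimately show ?thesis by blast
qed

end

lemma AE_lt1: "AE q in noise. \<forall>j. q j < 1"
proof -
  have "AE x in U. x < 1"
  proof (rule AE_I')
    show "{1::real} \<in> null_sets U"
      by (simp add: null_sets_def emeasure_restrict_space sets_restrict_space_iff)
    show "{x \<in> space U. \<not> x < 1} \<subseteq> {1}" by (auto simp: space_restrict_space)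
  qed
  then have "AE q in noise. q j < 1" for j
    unfolding noise_def by (rule NP.AE_component[of j, simplified])
  then show ?thesis by (simp add: AE_all_countable)
qed

context
  fixes g1 g2 :: real
  assumes g1: "g1 > 0" and g2: "g2 > 0"
begin

lemma pair_key:
  assumes par: "x mod 2 = y mod 2" and eps: "\<epsilon> > 0"
  shows "\<exists>n. measure noise {q\<in>space noise. phi g1 g2 n q x \<noteq> phi g1 g2 n q y} \<le> \<epsilon>"
proof (rule ccontr)
  let ?D = "\<lambda>n. {q\<in>space noise. phi g1 g2 n q x \<noteq> phi g1 g2 n q y}"
  let ?u = "\<lambda>n. measure noise (?D n)"
  assume "\<not> ?thesis"
  then have big: "\<And>n. ?u n > \<epsilon>" by (simp add: not_le)
  obtain Ax where Ax: "Ax \<ge> 0" "\<And>n k. measure noise {q\<in>space noise. k \<le> phi g1 g2 n q x} \<le> Ax / 2 ^ k"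
    using tail[OF g1 g2, of x] by blast
  obtain Ay where Ay: "Ay \<ge> 0" "\<And>n k. measure noise {q\<in>space noise. k \<le> phi g1 g2 n q y} \<le> Ay / 2 ^ k"
    using tail[OF g1 g2, of y] by blast
  define C where "C = Ax + Ay + 1"
  have C: "C > 0" using Ax Ay by (simp add: C_def)
  obtain R where R: "(1/2::real) ^ R < \<epsilon> / (2 * C)"
    using real_arch_pow_inv[of "\<epsilon> / (2 * C)" "1/2"] eps C by auto
  have tailR: "Ax / 2 ^ Suc R + Ay / 2 ^ Suc R \<le> \<epsilon> / 2"
  proof -
    have "Ax / 2 ^ Suc R + Ay / 2 ^ Suc R \<le> C * (1/2) ^ R"
      using Ax Ay by (simp add: C_def power_one_over field_simps)
    also have "\<dots> \<le> \<epsilon> / 2" using R C by (simp add: field_simps)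
    finally show ?thesis .
  qed
  define p1 where "p1 = g1 / (g1 + g2)"
  have p1: "0 \<le> p1" "p1 < 1" using g1 g2 by (auto simp: p1_def)
  define \<delta> where "\<delta> = (1 - p1) ^ R"
  have \<delta>: "\<delta> > 0" using p1 by (simp add: \<delta>_def)
  let ?S = "{p1..<1}"
  have S: "?S \<in> sets U" "measure U ?S = 1 - p1" using U_Ico[of p1 1] p1 by auto
  let ?Q = "\<lambda>a b. a \<le> R \<and> b \<le> R \<and> a \<noteq> b"
  let ?E = "\<lambda>n. {q\<in>space noise. ?Q (phi g1 g2 n q x) (phi g1 g2 n q y)}"
  let ?EF = "\<lambda>n. {q\<in>space noise. ?Q (phi g1 g2 n q x) (phi g1 g2 n q y) \<and> (\<forall>j\<in>{n..<n+R}. q j \<in> ?S)}"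
  have Dm: "?D n \<in> sets noise" for n using meas_Q[where Q="\<lambda>a b. a \<noteq> b"] by blast
  have Em: "?E n \<in> sets noise" for n by (rule meas_Q)
  have EFm: "?EF n \<in> sets noise" for n by (rule meas_Q_box[OF S(1)])
  have step: "?u (n + R) \<le> ?u n - \<epsilon> / 2 * \<delta>" for n
  proof -
    let ?X = "{q\<in>space noise. Suc R \<le> phi g1 g2 n q x}"
    let ?Y = "{q\<in>space noise. Suc R \<le> phi g1 g2 n q y}"
    have Xm: "?X \<in> sets noise" "?Y \<in> sets noise"
      using meas_Q[where Q="\<lambda>a b. Suc R \<le> a"] meas_Q[where Q="\<lambda>a b. Suc R \<le> b"] by blast+
    have "?D n \<subseteq> ?E n \<union> ?X \<union> ?Y" by auto
    then have "?u n \<le> measure noise (?E n \<union> ?X \<union> ?Y)"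
      using Em Xm by (intro N.finite_measure_mono) auto
    also have "\<dots> \<le> measure noise (?E n \<union> ?X) + measure noise ?Y"
      using Em Xm by (intro measure_Un_le) auto
    also have "\<dots> \<le> measure noise (?E n) + measure noise ?X + measure noise ?Y"
      using Em Xm measure_Un_le[of "?E n" noise ?X] by auto
    finally have uE: "?u n \<le> measure noise (?E n) + \<epsilon> / 2"
      using Ax(2)[of "Suc R" n] Ay(2)[of "Suc R" n] tailR by linarith
    have EF: "measure noise (?EF n) = measure noise (?E n) * \<delta>"
      unfolding \<delta>_def using block_indep[OF S(1), where Q="?Q" and m=R and n=n and x=x and y=y] S(2) by simp
    have ae: "AE q in noise. q \<in> ?D (n + R) \<longrightarrow> q \<in> ?D n - ?EF n"
      using AE_lt1
    proof (rule eventually_mono)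
      fix q :: "nat \<Rightarrow> real" assume lt: "\<forall>j. q j < 1"
      show "q \<in> ?D (n + R) \<longrightarrow> q \<in> ?D n - ?EF n"
      proof
        assume qD: "q \<in> ?D (n + R)"
        have "phi g1 g2 n q x \<noteq> phi g1 g2 n q y"
          using qD stay_eq[OF g1 g2, of n q x y R] by auto
        moreover have "q \<notin> ?EF n"
        proof
          assume qE: "q \<in> ?EF n"
          have ds: "\<And>j. n \<le> j \<Longrightarrow> j < n + R \<Longrightarrow> g1 / (g1 + g2) \<le> q j \<and> q j < 1"
            using qE lt by (auto simp: p1_def)
          have "phi g1 g2 (n + R) q x \<le> max (phi g1 g2 n q x - R) 1"
            using down_steps[OF g1 g2, where n=n and k=R and q=q and x=x] ds by blast
          then have a1: "phi g1 g2 (n + R) q x \<le> 1" using qE by auto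
          have "phi g1 g2 (n + R) q y \<le> max (phi g1 g2 n q y - R) 1"
            using down_steps[OF g1 g2, where n=n and k=R and q=q and x=y] ds by blast
          then have a2: "phi g1 g2 (n + R) q y \<le> 1" using qE by auto
          have "phi g1 g2 (n + R) q x mod 2 = (x + (n + R)) mod 2"
            using parity[OF g1 g2, of "n + R" q x] lt by blast
          moreover have "phi g1 g2 (n + R) q y mod 2 = (y + (n + R)) mod 2"
            using parity[OF g1 g2, of "n + R" q y] lt by blast
          ultimately have "phi g1 g2 (n + R) q x mod 2 = phi g1 g2 (n + R) q y mod 2"
            using par by presburger
          with a1 a2 have "phi g1 g2 (n + R) q x = phi g1 g2 (n + R) q y"
            by presburger
          then show False using qD by auto
        qed
        ultimately show "q \<in> ?D n - ?EF n" using qD by auto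
      qed
    qed
    have "?u (n + R) \<le> measure noise (?D n - ?EF n)"
      using ae Dm EFm by (intro N.finite_measure_mono_AE) auto
    also have "\<dots> = ?u n - measure noise (?EF n)"
      using Dm EFm by (intro N.finite_measure_Diff) auto
    also have "\<dots> \<le> ?u n - \<epsilon> / 2 * \<delta>"
    proof -
      have "\<epsilon> / 2 \<le> measure noise (?E n)" using uE big[of n] by linarith
      then have "\<epsilon> / 2 * \<delta> \<le> measure noise (?E n) * \<delta>" using \<delta> by (intro mult_right_mono) auto
      then show ?thesis using EF by linarith
    qed
    finally show ?thesis .
  qed
  have iter: "?u (k * R) \<le> 1 - real k * (\<epsilon> / 2 * \<delta>)" for k
  proof (induction k)
    case 0 then show ?case using N.prob_le_1 by simp
  next
    case (Suc k)
    have "?u (Suc k * R) = ?u (k * R + R)" by (simp add: add.commute)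
    also have "\<dots> \<le> ?u (k * R) - \<epsilon> / 2 * \<delta>" by (rule step)
    finally have h: "?u (Suc k * R) \<le> ?u (k * R) - \<epsilon> / 2 * \<delta>" .
    have "real (Suc k) * (\<epsilon> / 2 * \<delta>) = real k * (\<epsilon> / 2 * \<delta>) + \<epsilon> / 2 * \<delta>"
      by (simp add: algebra_simps)
    then show ?case using h Suc.IH by linarith
  qed
  obtain k :: nat where k: "1 / (\<epsilon> / 2 * \<delta>) < real k" using reals_Archimedean2 by blast
  have pos: "\<epsilon> / 2 * \<delta> > 0" using eps \<delta> by simp
  then have "1 < real k * (\<epsilon> / 2 * \<delta>)" using k by (simp add: field_simps)
  then have "?u (k * R) < 0" using iter[of k] by linarith
  then show False using measure_nonneg[of noise "?D (k * R)"] by linarith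
qed

lemma pair_lim:
  assumes par: "x mod 2 = y mod 2"
  shows "(\<lambda>n. measure noise {q\<in>space noise. phi g1 g2 n q x \<noteq> phi g1 g2 n q y}) \<longlonglongrightarrow> 0"
proof -
  let ?D = "\<lambda>n. {q\<in>space noise. phi g1 g2 n q x \<noteq> phi g1 g2 n q y}"
  let ?u = "\<lambda>n. measure noise (?D n)"
  have Dm: "?D n \<in> sets noise" for n using meas_Q[where Q="\<lambda>a b. a \<noteq> b"] by blast
  have mono: "?u m \<le> ?u n" if "n \<le> m" for n m
  proof -
    have "?D m \<subseteq> ?D n"
    proof
      fix q assume "q \<in> ?D m"
      moreover have "phi g1 g2 n q x = phi g1 g2 n q y \<Longrightarrow> phi g1 g2 (n + (m - n)) q x = phi g1 g2 (n + (m - n)) q y"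
        by (rule stay_eq[OF g1 g2])
      ultimately show "q \<in> ?D n" using that by auto
    qed
    then show ?thesis using Dm by (intro N.finite_measure_mono) auto
  qed
  show ?thesis
  proof (rule LIMSEQ_I)
    fix r :: real assume r: "0 < r"
    obtain n0 where n0: "?u n0 \<le> r / 2" using pair_key[OF par, of "r/2"] r by auto
    have "norm (?u n - 0) < r" if "n0 \<le> n" for n
      using mono[OF that] n0 r measure_nonneg[of noise "?D n"] by simp
    then show "\<exists>no. \<forall>n\<ge>no. norm (?u n - 0) < r" by blast
  qed
qed

end

lemma setdist_zero: "setdist x K = 0 \<longleftrightarrow> x \<in> K"
proof
  assume "x \<in> K"
  then have "setdist x K \<le> 0" unfolding setdist_def by (rule INF_lower2) simp
  moreover have "setdist x K \<ge> 0" unfolding setdist_def by (rule INF_greatest) simp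
  ultimately show "setdist x K = 0" by simp
next
  assume h: "setdist x K = 0"
  show "x \<in> K"
  proof (rule ccontr)
    assume "x \<notin> K"
    have one: "(1::ereal) \<le> ereal \<bar>real x - real y\<bar>" if "y \<in> K" for y
    proof -
      have "x \<noteq> y" using that \<open>x \<notin> K\<close> by auto
      then have "Suc x \<le> y \<or> Suc y \<le> x" by auto
      then have "real x + 1 \<le> real y \<or> real y + 1 \<le> real x"
        by (auto simp: of_nat_Suc[symmetric] simp del: of_nat_Suc)
      then have "1 \<le> \<bar>real x - real y\<bar>" by linarith
      then show ?thesis by simp
    qed
    then have "(1::ereal) \<le> setdist x K" unfolding setdist_def by (intro INF_greatest) (use one in auto)
    with h show False by simp
  qed
qed

lemma suminf_indicator_card: "finite A \<Longrightarrow> (\<Sum>z. indicator A z :: ennreal) = of_nat (card A)"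
  by (subst suminf_finite[of A]) auto

lemma memK_meas:
  assumes "random_set K"
  shows "Measurable.pred noise (\<lambda>q. x \<in> K q)"
proof -
  have [measurable]: "(\<lambda>q. setdist x (K q)) \<in> borel_measurable noise"
    using assms unfolding random_set_def by blast
  have "Measurable.pred noise (\<lambda>q. setdist x (K q) = 0)" by measurable
  then show ?thesis by (simp add: setdist_zero)
qed

lemma phi_noise_meas[measurable]: "(\<lambda>q. phi g1 g2 n q x) \<in> measurable noise (count_space UNIV)"
  unfolding noise_def by (rule phi_meas) simp

lemma img_meas:
  assumes "random_set K"
  shows "Measurable.pred noise (\<lambda>q. z \<in> phi g1 g2 n q ` K q)"
proof -
  have [measurable]: "Measurable.pred noise (\<lambda>q. x \<in> K q)" for x
    using memK_meas[OF assms] .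
  have eq: "(\<lambda>q. z \<in> phi g1 g2 n q ` K q) = (\<lambda>q. \<exists>x::nat. x \<in> K q \<and> phi g1 g2 n q x = z)" by auto
  show ?thesis unfolding eq by measurable
qed

lemma card_meas:
  assumes "finite_random_set K"
  shows "(\<lambda>q. real (card (phi g1 g2 n q ` K q))) \<in> borel_measurable noise"
proof -
  have rs: "random_set K" and fin: "\<And>q. q \<in> space noise \<Longrightarrow> finite (K q)"
    using assms unfolding finite_random_set_def by auto
  have [measurable]: "Measurable.pred noise (\<lambda>q. z \<in> phi g1 g2 n q ` K q)" for z
    by (rule img_meas[OF rs])
  have ind: "(\<lambda>q. indicator (phi g1 g2 n q ` K q) z :: ennreal) \<in> borel_measurable noise" for z
  proof -
    have "(\<lambda>q. if z \<in> phi g1 g2 n q ` K q then 1 else (0::ennreal)) \<in> borel_measurable noise"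
      by measurable
    then show ?thesis by (simp add: indicator_def)
  qed
  have "(\<lambda>q. enn2real (\<Sum>z. indicator (phi g1 g2 n q ` K q) z :: ennreal)) \<in> borel_measurable noise"
    using ind by measurable
  then show ?thesis
  proof (rule measurable_cong[THEN iffD1, rotated])
    fix q assume "q \<in> space noise"
    then have "finite (phi g1 g2 n q ` K q)" using fin by auto
    then show "enn2real (\<Sum>z. indicator (phi g1 g2 n q ` K q) z :: ennreal) = real (card (phi g1 g2 n q ` K q))"
      by (simp add: suminf_indicator_card)
  qed
qed

theorem proposition3p7:
  fixes g1 g2 :: real and K :: "(nat \<Rightarrow> real) \<Rightarrow> nat set"
  assumes "g1 > 0" and "g2 > 0"
    and "finite_random_set K"
    and "\<exists>i\<in>{0,1}. AE q in noise. K q \<subseteq> W i"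
  shows "\<forall>e>0.
      (\<forall>n. {q\<in>space noise. \<bar>real (card (phi g1 g2 n q ` K q)) - 1\<bar> > e} \<in> sets noise) \<and>
      ((\<lambda>n. measure noise {q\<in>space noise. \<bar>real (card (phi g1 g2 n q ` K q)) - 1\<bar> > e})
         \<longlonglongrightarrow> 0)"
proof (intro allI impI conjI)
  fix e :: real assume e: "e > 0"
  have rs: "random_set K" and fin: "\<And>q. q \<in> space noise \<Longrightarrow> finite (K q)"
    and ne: "\<And>q. q \<in> space noise \<Longrightarrow> K q \<noteq> {}"
    using assms(3) unfolding finite_random_set_def by auto
  let ?bad = "\<lambda>n. {q\<in>space noise. \<bar>real (card (phi g1 g2 n q ` K q)) - 1\<bar> > e}"
  have badm: "?bad n \<in> sets noise" for n
  proof -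
    have [measurable]: "(\<lambda>q. real (card (phi g1 g2 n q ` K q))) \<in> borel_measurable noise"
      by (rule card_meas[OF assms(3)])
    have "Measurable.pred noise (\<lambda>q. \<bar>real (card (phi g1 g2 n q ` K q)) - 1\<bar> > e)" by measurable
    then show ?thesis by (simp add: pred_def)
  qed
  show "?bad n \<in> sets noise" for n by (rule badm)
  obtain i where aeW: "AE q in noise. K q \<subseteq> W i" using assms(4) by blast
  have [measurable]: "Measurable.pred noise (\<lambda>q. x \<in> K q)" for x by (rule memK_meas[OF rs])
  let ?G = "\<lambda>m. {q\<in>space noise. K q \<subseteq> {..m}}"
  have Gm: "?G m \<in> sets noise" for m
  proof -
    have "Measurable.pred noise (\<lambda>q. \<forall>x::nat. x \<in> K q \<longrightarrow> x \<le> m)" by measurable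
    then show ?thesis by (simp add: pred_def subset_iff)
  qed
  let ?D = "\<lambda>n x y. {q\<in>space noise. phi g1 g2 n q x \<noteq> phi g1 g2 n q y}"
  have Dm: "?D n x y \<in> sets noise" for n x y using meas_Q[where Q="\<lambda>a b. a \<noteq> b"] by blast
  show "(\<lambda>n. measure noise (?bad n)) \<longlonglongrightarrow> 0"
  proof (rule LIMSEQ_I)
    fix r :: real assume r: "0 < r"
    have "(\<lambda>m. measure noise (?G m)) \<longlonglongrightarrow> measure noise (\<Union>m. ?G m)"
      using Gm by (intro N.finite_Lim_measure_incseq) (auto simp: incseq_def)
    moreover have "(\<Union>m. ?G m) = space noise"
    proof
      show "space noise \<subseteq> (\<Union>m. ?G m)"
      proof
        fix q assume q: "q \<in> space noise"
        then obtain m where "\<forall>x\<in>K q. x \<le> m" using fin[OF q] finite_nat_set_iff_bounded_le by blast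
        then show "q \<in> (\<Union>m. ?G m)" using q by auto
      qed
    qed auto
    ultimately have "(\<lambda>m. measure noise (?G m)) \<longlonglongrightarrow> 1" using N.prob_space by simp
    then have "eventually (\<lambda>m. 1 - r / 2 < measure noise (?G m)) sequentially"
      using r by (intro order_tendstoD(1)) auto
    then obtain m where m: "measure noise (?G m) > 1 - r / 2"
      unfolding eventually_sequentially by blast
    have Gc: "measure noise (space noise - ?G m) < r / 2"
      using m Gm N.finite_measure_compl[of "?G m"] N.prob_space by simp
    define P where "P = {(x, y). x \<le> m \<and> y \<le> m \<and> x mod 2 = (y::nat) mod 2}"
    have Pfin: "finite P"
    proof -
      have "P \<subseteq> {..m} \<times> {..m}" by (auto simp: P_def)
      then show ?thesis by (rule finite_subset) auto
    qed
    have "(\<lambda>n. \<Sum>(x, y)\<in>P. measure noise (?D n x y)) \<longlonglongrightarrow> (\<Sum>(x, y)\<in>P. 0)"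
      using pair_lim[OF assms(1,2)] by (intro tendsto_sum) (auto simp: P_def)
    then have "(\<lambda>n. \<Sum>(x, y)\<in>P. measure noise (?D n x y)) \<longlonglongrightarrow> 0" by simp
    then have "eventually (\<lambda>n. (\<Sum>(x, y)\<in>P. measure noise (?D n x y)) < r / 2) sequentially"
      using r by (intro order_tendstoD(2)) auto
    then obtain N where N: "\<And>n. n \<ge> N \<Longrightarrow> (\<Sum>(x, y)\<in>P. measure noise (?D n x y)) < r / 2"
      unfolding eventually_sequentially by blast
    have "norm (measure noise (?bad n) - 0) < r" if n: "n \<ge> N" for n
    proof -
      let ?Un = "(space noise - ?G m) \<union> (\<Union>p\<in>P. ?D n (fst p) (snd p))"
      have Unm: "(\<Union>p\<in>P. ?D n (fst p) (snd p)) \<in> sets noise" using Pfin Dm by (intro sets.finite_UN) auto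
      have ae: "AE q in noise. q \<in> ?bad n \<longrightarrow> q \<in> ?Un"
        using aeW
      proof (rule eventually_mono)
        fix q :: "nat \<Rightarrow> real" assume KW: "K q \<subseteq> W i"
        show "q \<in> ?bad n \<longrightarrow> q \<in> ?Un"
        proof
          assume qb: "q \<in> ?bad n"
          then have q: "q \<in> space noise" by auto
          show "q \<in> ?Un"
          proof (rule ccontr)
            assume nU: "q \<notin> ?Un"
            have nG: "q \<notin> space noise - ?G m" using nU by blast
            have nD: "q \<notin> (\<Union>p\<in>P. ?D n (fst p) (snd p))" using nU by blast
            have qG: "K q \<subseteq> {..m}" using nG q by simp
            have eq: "phi g1 g2 n q x = phi g1 g2 n q y" if "x \<in> K q" "y \<in> K q" for x y
            proof -
              have "x \<in> W i" "y \<in> W i" "x \<le> m" "y \<le> m" using that qG KW by auto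
              then have xy: "(x, y) \<in> P" by (simp add: P_def W_def)
              have "q \<notin> ?D n (fst (x, y)) (snd (x, y))" using nD xy by blast
              then show ?thesis using q by simp
            qed
            obtain x0 where x0: "x0 \<in> K q" using ne[OF q] by blast
            have "phi g1 g2 n q ` K q = {phi g1 g2 n q x0}" using eq x0 by blast
            then have "card (phi g1 g2 n q ` K q) = 1" by simp
            moreover have "\<bar>real (card (phi g1 g2 n q ` K q)) - 1\<bar> > e" using qb by blast
            ultimately show False using e by simp
          qed
        qed
      qed
      have "measure noise (?bad n) \<le> measure noise ?Un"
        using ae Gm Unm by (intro N.finite_measure_mono_AE) auto
      also have "\<dots> \<le> measure noise (space noise - ?G m) + measure noise (\<Union>p\<in>P. ?D n (fst p) (snd p))"
        using Gm Unm by (intro measure_Un_le) auto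
      also have "measure noise (\<Union>p\<in>P. ?D n (fst p) (snd p)) \<le> (\<Sum>p\<in>P. measure noise (?D n (fst p) (snd p)))"
        using Pfin Dm by (intro measure_UNION_le) auto
      also have "(\<Sum>p\<in>P. measure noise (?D n (fst p) (snd p))) = (\<Sum>(x, y)\<in>P. measure noise (?D n x y))"
        by (simp add: case_prod_beta)
      finally have "measure noise (?bad n) < r" using Gc N[OF n] by linarith
      then show ?thesis using measure_nonneg[of noise "?bad n"] by simp
    qed
    then show "\<exists>no. \<forall>n\<ge>no. norm (measure noise (?bad n) - 0) < r" by blast
  qed
qed

end
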